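(* Let $A\in\mathbb{R}^{D\times D}$ be real symmetric and let $\hat A_1,\hat A_2,\dots$ be mutually independent random $D\times D$ matrices with $\mathbb{E}[\hat A_j]=A$ for all $j$. Define $\hat T_0=I$, $\hat T_1=\hat A_1$, and $\hat T_k=2\hat A_k\hat T_{k-1}-\hat T_{k-2}$ for $k\ge2$. Suppose there is a constant $\alpha$ such that $$4\,\mathbb{E}[\|\hat A_k\|^2]+2\,\mathbb{E}[\|\hat A_k\|]+1\le\alpha\qquad\text{for all }k\ge1.$$ Then for all $k\ge 0$, $$\mathbb{E}\big[\|\hat T_k\|_F^2\big]\le D\,\alpha^k.$$
   Context: For a $D\times D$ matrix $M$, $\|M\|$ denotes the spectral (operator) norm and $\|M\|_F=(\sum_{i,j}M_{ij}^2)^{1/2}$ the Frobenius norm. *)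

theory Defs
  imports "HOL-Probability.Probability"
begin

text \<open>Spectral (operator) norm of a square matrix. Note that the library norm on
  real^'n^'n is already the Frobenius norm.\<close>
definition spec_norm :: "real^'n^'n \<Rightarrow> real" where
  "spec_norm M = onorm (\<lambda>x. M *v x)"

fun chebT :: "(nat \<Rightarrow> real^'n^'n) \<Rightarrow> nat \<Rightarrow> real^'n^'n" where
  "chebT B 0 = mat 1"
| "chebT B (Suc 0) = B 1"
| "chebT B (Suc (Suc k)) = (2::real) *\<^sub>R (B (Suc (Suc k)) ** chebT B (Suc k)) - chebT B k"

end

theory Submission
  imports Defs
begin

lemma norm_sq_vec: "(norm (x::real^'m))^2 = (\<Sum>i\<in>UNIV. (x$i)^2)"
  unfolding power2_norm_eq_inner inner_vec_def by (simp add: power2_eq_square)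

lemma norm_sq_mat: "(norm (M::real^'m^'k))^2 = (\<Sum>i\<in>UNIV. (norm (M$i))^2)"
  unfolding power2_norm_eq_inner inner_vec_def by simp

lemma matvec_le: "norm ((M::real^'m^'k) *v x) \<le> norm M * norm x"
proof -
  have "(norm (M *v x))^2 = (\<Sum>i\<in>UNIV. ((M$i) \<bullet> x)^2)"
    by (simp add: norm_sq_vec matrix_vector_mult_def inner_vec_def)
  also have "\<dots> \<le> (\<Sum>i\<in>UNIV. (norm (M$i))^2 * (norm x)^2)"
  proof (rule sum_mono)
    fix i
    have "\<bar>M$i \<bullet> x\<bar> \<le> norm (M$i) * norm x" by (rule Cauchy_Schwarz_ineq2)
    then have "\<bar>M$i \<bullet> x\<bar>^2 \<le> (norm (M$i) * norm x)^2"
      by (intro power_mono) auto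
    then show "((M$i) \<bullet> x)^2 \<le> (norm (M$i))^2 * (norm x)^2"
      by (simp add: power_mult_distrib)
  qed
  also have "\<dots> = (norm M * norm x)^2"
    by (simp add: norm_sq_mat power_mult_distrib sum_distrib_right)
  finally show ?thesis
    by (rule power2_le_imp_le) simp
qed

lemma spec_norm_nonneg: "0 \<le> spec_norm M"
  unfolding spec_norm_def by (rule onorm_pos_le) simp

lemma spec_norm_le_norm: "spec_norm M \<le> norm M"
  unfolding spec_norm_def by (rule onorm_le) (rule matvec_le)

lemma matvec_spec: "norm (M *v x) \<le> spec_norm M * norm x"
  unfolding spec_norm_def using onorm[OF matrix_vector_mul_bounded_linear, of M x] .

lemma spec_norm_lip: "\<bar>spec_norm M - spec_norm N\<bar> \<le> norm (M - N)"
proof -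
  have t: "spec_norm M \<le> spec_norm N + norm (M - N)" for M N :: "real^'m^'m"
  proof -
    have "spec_norm M = onorm (\<lambda>x. N *v x + (M - N) *v x)"
      unfolding spec_norm_def by (simp add: matrix_vector_mult_diff_rdistrib)
    also have "\<dots> \<le> spec_norm N + spec_norm (M - N)"
      unfolding spec_norm_def by (rule onorm_triangle) simp_all
    finally show ?thesis using spec_norm_le_norm[of "M - N"] by simp
  qed
  show ?thesis using t[of M N] t[of N M] by (simp add: norm_minus_commute)
qed

lemma spec_norm_cont: "continuous_on UNIV spec_norm"
  unfolding continuous_on_iff
  by (metis spec_norm_lip dist_norm dist_real_def order_le_less_trans)

lemma norm_sq_entries: "(norm (M::real^'m^'k))^2 = (\<Sum>i\<in>UNIV. \<Sum>j\<in>UNIV. (M$i$j)^2)"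
  by (simp add: norm_sq_mat norm_sq_vec)

lemma frob_mult_le: "norm ((A::real^'n^'n) ** X) \<le> spec_norm A * norm (X::real^'n^'n)"
proof -
  define c where "c j = (\<chi> i. X$i$j)" for j
  have e: "(A ** X)$i$j = (A *v c j)$i" for i j
    by (simp add: matrix_matrix_mult_def matrix_vector_mult_def c_def)
  have "(norm (A ** X))^2 = (\<Sum>j\<in>UNIV. \<Sum>i\<in>UNIV. ((A *v c j)$i)^2)"
    by (subst sum.swap) (simp add: norm_sq_entries e)
  also have "\<dots> = (\<Sum>j\<in>UNIV. (norm (A *v c j))^2)"
    by (simp add: norm_sq_vec)
  also have "\<dots> \<le> (\<Sum>j\<in>UNIV. (spec_norm A)^2 * (norm (c j))^2)"
  proof (rule sum_mono)
    fix j
    have "(norm (A *v c j))^2 \<le> (spec_norm A * norm (c j))^2"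
      by (intro power_mono matvec_spec) simp
    then show "(norm (A *v c j))^2 \<le> (spec_norm A)^2 * (norm (c j))^2"
      by (simp add: power_mult_distrib)
  qed
  also have "\<dots> = (spec_norm A * norm X)^2"
  proof -
    have "(norm X)^2 = (\<Sum>j\<in>UNIV. (norm (c j))^2)"
      by (simp add: norm_sq_entries norm_sq_vec c_def, rule sum.swap)
    then show ?thesis by (simp add: power_mult_distrib sum_distrib_left)
  qed
  finally show ?thesis
    by (rule power2_le_imp_le) (simp add: spec_norm_nonneg)
qed

lemma norm_id_sq: "(norm (mat 1 :: real^'n^'n))^2 = real CARD('n)"
proof -
  have 1: "(mat 1 $ i $ j)^2 = (if i = j then 1 else 0::real)" for i j :: 'n
    by (simp add: mat_def)
  have 2: "(\<Sum>j\<in>UNIV. if i = j then 1 else (0::real)) = 1" for i :: 'n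
    using sum.delta[of "UNIV::'n set" i "\<lambda>_. 1::real"] by (simp add: eq_commute)
  have "(norm (mat 1 :: real^'n^'n))^2 = (\<Sum>i\<in>UNIV. \<Sum>j\<in>UNIV. ((mat 1 :: real^'n^'n) $ i $ j)^2)"
    by (rule norm_sq_entries)
  also have "\<dots> = (\<Sum>i\<in>(UNIV::'n set). 1::real)"
    by (simp only: 1 2)
  also have "\<dots> = real CARD('n)" by simp
  finally show ?thesis .
qed

lemma norm_le_spec_card: "(norm (A::real^'n^'n))^2 \<le> real CARD('n) * (spec_norm A)^2"
proof -
  have "norm A \<le> spec_norm A * norm (mat 1 :: real^'n^'n)"
    using frob_mult_le[of A "mat 1"] by simp
  then have "(norm A)^2 \<le> (spec_norm A * norm (mat 1 :: real^'n^'n))^2"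
    by (intro power_mono) auto
  then show ?thesis by (simp add: power_mult_distrib norm_id_sq, simp add: mult.commute)
qed

lemma step_bound:
  fixes B X Y :: "real^'n^'n"
  shows "(norm ((2::real) *\<^sub>R (B ** X) - Y))^2 \<le>
     (4 * (spec_norm B)^2 + 2 * spec_norm B) * (norm X)^2 + (2 * spec_norm B + 1) * (norm Y)^2"
proof -
  let ?s = "spec_norm B"
  have s0: "0 \<le> ?s" by (rule spec_norm_nonneg)
  have "norm ((2::real) *\<^sub>R (B ** X) - Y) \<le> 2 * norm (B ** X) + norm Y"
    using norm_triangle_ineq4[of "(2::real) *\<^sub>R (B ** X)" Y] by simp
  also have "\<dots> \<le> 2 * (?s * norm X) + norm Y"
    using frob_mult_le[of B X] by simp
  finally have h: "norm ((2::real) *\<^sub>R (B ** X) - Y) \<le> 2 * ?s * norm X + norm Y" by simp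
  have "(norm ((2::real) *\<^sub>R (B ** X) - Y))^2 \<le> (2 * ?s * norm X + norm Y)^2"
    by (intro power_mono h) simp
  also have "\<dots> \<le> (4 * ?s^2 + 2 * ?s) * (norm X)^2 + (2 * ?s + 1) * (norm Y)^2"
  proof -
    have "2 * (norm X * norm Y) \<le> (norm X)^2 + (norm Y)^2"
    proof -
      have "0 \<le> (norm X - norm Y)^2" by simp
      then show ?thesis unfolding power2_diff by linarith
    qed
    then have "?s * (2 * (norm X * norm Y)) \<le> ?s * ((norm X)^2 + (norm Y)^2)"
      by (rule mult_left_mono) (rule s0)
    then show ?thesis by (simp add: power2_eq_square algebra_simps)
  qed
  finally show ?thesis .
qed

lemma spec_meas[measurable]: "spec_norm \<in> borel_measurable borel"
  by (rule borel_measurable_continuous_onI[OF spec_norm_cont])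

lemma cont_matmul: "continuous_on UNIV (\<lambda>x::((real^'n^'n) \<times> (real^'n^'n)). fst x ** snd x)"
  unfolding matrix_matrix_mult_def by (intro continuous_intros)

lemma borel_measurable_matmul[measurable]:
  fixes f g :: "'b \<Rightarrow> real^'n^'n"
  assumes "f \<in> borel_measurable N" "g \<in> borel_measurable N"
  shows "(\<lambda>x. f x ** g x) \<in> borel_measurable N"
  using assms cont_matmul by (rule borel_measurable_continuous_Pair)

lemma chebT_cong: "(\<And>i. 1 \<le> i \<Longrightarrow> i \<le> k \<Longrightarrow> B i = C i) \<Longrightarrow> chebT B k = chebT C k"
  by (induction B k rule: chebT.induct) auto

lemma chebT_meas:
  "m \<le> n \<Longrightarrow> (\<lambda>z. chebT z m :: real^'n^'n) \<in> borel_measurable (PiM {1..n} (\<lambda>_. borel))"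
proof (induction m rule: less_induct)
  case (less m)
  show ?case
  proof (cases m)
    case 0
    then show ?thesis by simp
  next
    case (Suc j)
    show ?thesis
    proof (cases j)
      case 0
      with Suc less.prems show ?thesis by (simp add: measurable_component_singleton)
    next
      case (Suc k)
      have m: "m = Suc (Suc k)" using Suc \<open>m = Suc j\<close> by simp
      have [measurable]: "(\<lambda>z. chebT z (Suc k) :: real^'n^'n) \<in> borel_measurable (PiM {1..n} (\<lambda>_. borel))"
        using less m by auto
      have [measurable]: "(\<lambda>z. chebT z k :: real^'n^'n) \<in> borel_measurable (PiM {1..n} (\<lambda>_. borel))"
        using less m by auto
      have [measurable]: "(\<lambda>z. z (Suc (Suc k)) :: real^'n^'n) \<in> borel_measurable (PiM {1..n} (\<lambda>_. borel))"
        using less.prems m by (intro measurable_component_singleton) auto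
      show ?thesis unfolding m chebT.simps by measurable
    qed
  qed
qed

lemma indep_nn_mult:
  fixes F G :: "'a \<Rightarrow> ennreal"
  assumes "prob_space M" "prob_space.indep_var M borel F borel G"
  shows "(\<integral>\<^sup>+\<omega>. F \<omega> * G \<omega> \<partial>M) = (\<integral>\<^sup>+\<omega>. F \<omega> \<partial>M) * (\<integral>\<^sup>+\<omega>. G \<omega> \<partial>M)"
proof -
  interpret prob_space M by fact
  have e: "case_bool borel borel = (\<lambda>_::bool. (borel :: ennreal measure))"
    by (rule ext) (simp split: bool.split)
  have "indep_vars (\<lambda>_. borel) (case_bool F G) UNIV"
    using assms(2) unfolding indep_var_def e .
  from indep_vars_nn_integral[OF _ this] show ?thesis
    by (simp add: UNIV_bool mult.commute)
qed

theorem mainTheorem3: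
  fixes M :: "'a measure"
    and A :: "real^'n^'n"
    and Ahat :: "nat \<Rightarrow> 'a \<Rightarrow> real^'n^'n"
    and \<alpha> :: real
  assumes "prob_space M"
    and "transpose A = A"
    and "prob_space.indep_vars M (\<lambda>_. borel) Ahat {1..}"
    and "\<And>j. j \<ge> 1 \<Longrightarrow> integrable M (Ahat j)"
    and "\<And>j. j \<ge> 1 \<Longrightarrow> prob_space.expectation M (Ahat j) = A"
    and "\<And>k. k \<ge> 1 \<Longrightarrow>
           4 * (\<integral>\<^sup>+ \<omega>. ennreal ((spec_norm (Ahat k \<omega>))\<^sup>2) \<partial>M)
           + 2 * (\<integral>\<^sup>+ \<omega>. ennreal (spec_norm (Ahat k \<omega>)) \<partial>M) + 1 \<le> ennreal \<alpha>"
  shows "\<forall>k. (\<integral>\<^sup>+ \<omega>. ennreal ((norm (chebT (\<lambda>j. Ahat j \<omega>) k))\<^sup>2) \<partial>M)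
             \<le> ennreal (real CARD('n) * \<alpha> ^ k)"
proof -
  interpret P: prob_space M by fact
  have rv: "Ahat j \<in> borel_measurable M" if "j \<ge> 1" for j
    using assms(3) that unfolding P.indep_vars_def by auto
  define Pm where "Pm k = (\<integral>\<^sup>+ \<omega>. ennreal ((spec_norm (Ahat k \<omega>))\<^sup>2) \<partial>M)" for k
  define Qm where "Qm k = (\<integral>\<^sup>+ \<omega>. ennreal (spec_norm (Ahat k \<omega>)) \<partial>M)" for k
  define G where "G k = (\<integral>\<^sup>+ \<omega>. ennreal ((norm (chebT (\<lambda>j. Ahat j \<omega>) k))\<^sup>2) \<partial>M)" for k
  define a where "a = ennreal \<alpha>"
  define d where "d = ennreal (real CARD('n))"
  have hyp: "4 * Pm k + 2 * Qm k + 1 \<le> a" if "k \<ge> 1" for k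
    using assms(6)[OF that] unfolding Pm_def Qm_def a_def .
  have a0: "\<alpha> \<ge> 0"
  proof (rule ccontr)
    assume "\<not> \<alpha> \<ge> 0"
    then have "a = 0" unfolding a_def using ennreal_neg by auto
    with hyp[of 1] show False by simp
  qed
  have target: "ennreal (real CARD('n) * \<alpha> ^ k) = d * a ^ k" for k
    unfolding d_def a_def using a0 by (simp add: ennreal_mult ennreal_power)
  have base0: "G 0 \<le> d * a ^ 0"
    unfolding G_def d_def by (simp add: norm_id_sq P.emeasure_space_1)
  have base1: "G 1 \<le> d * a ^ 1"
  proof -
    have "G 1 \<le> (\<integral>\<^sup>+ \<omega>. d * ennreal ((spec_norm (Ahat 1 \<omega>))\<^sup>2) \<partial>M)"
      unfolding G_def d_def
      by (intro nn_integral_mono) (simp add: ennreal_mult[symmetric] norm_le_spec_card)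
    also have "\<dots> = d * Pm 1"
      unfolding Pm_def using rv[of 1] by (intro nn_integral_cmult) (measurable, simp)
    also have "\<dots> \<le> d * a"
    proof (intro mult_left_mono)
      have e: "(1::ennreal) + 3 = 4" by simp
      have "(4::ennreal) * Pm 1 = Pm 1 + 3 * Pm 1" by (metis e distrib_right mult_1)
      then have "Pm 1 \<le> 4 * Pm 1 + 2 * Qm 1 + 1"
        by (simp add: add_increasing2 add.assoc)
      also have "\<dots> \<le> a" by (rule hyp) simp
      finally show "Pm 1 \<le> a" .
    qed simp
    finally show ?thesis by simp
  qed
  have step: "G (Suc (Suc k)) \<le> d * a ^ Suc (Suc k)"
    if IH1: "G k \<le> d * a ^ k" and IH2: "G (Suc k) \<le> d * a ^ Suc k" for k
  proof -
    define n where "n = Suc (Suc k)"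
    define X where "X \<omega> = restrict (\<lambda>i. Ahat i \<omega>) {n}" for \<omega>
    define Y where "Y \<omega> = restrict (\<lambda>i. Ahat i \<omega>) {1..Suc k}" for \<omega>
    have ind: "P.indep_var (PiM {n} (\<lambda>_. borel)) X (PiM {1..Suc k} (\<lambda>_. borel)) Y"
      unfolding X_def Y_def
      by (rule P.indep_var_restrict[OF assms(3)]) (auto simp: n_def)
    define f1 where "f1 x = ennreal (4 * (spec_norm (x n))\<^sup>2 + 2 * spec_norm (x n))" for x :: "nat \<Rightarrow> real^'n^'n"
    define f2 where "f2 x = ennreal (2 * spec_norm (x n) + 1)" for x :: "nat \<Rightarrow> real^'n^'n"
    define g1 where "g1 z = ennreal ((norm (chebT z (Suc k)))\<^sup>2)" for z :: "nat \<Rightarrow> real^'n^'n"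
    define g2 where "g2 z = ennreal ((norm (chebT z k))\<^sup>2)" for z :: "nat \<Rightarrow> real^'n^'n"
    have [measurable]: "(\<lambda>x. x n :: real^'n^'n) \<in> borel_measurable (PiM {n} (\<lambda>_. borel))"
      by (rule measurable_component_singleton) simp
    have [measurable]: "(\<lambda>z. chebT z (Suc k) :: real^'n^'n) \<in> borel_measurable (PiM {1..Suc k} (\<lambda>_. borel))"
      by (rule chebT_meas) simp
    have [measurable]: "(\<lambda>z. chebT z k :: real^'n^'n) \<in> borel_measurable (PiM {1..Suc k} (\<lambda>_. borel))"
      by (rule chebT_meas) simp
    have mf1: "f1 \<in> borel_measurable (PiM {n} (\<lambda>_. borel))" unfolding f1_def by measurable
    have mf2: "f2 \<in> borel_measurable (PiM {n} (\<lambda>_. borel))" unfolding f2_def by measurable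
    have mg1: "g1 \<in> borel_measurable (PiM {1..Suc k} (\<lambda>_. borel))" unfolding g1_def by measurable
    have mg2: "g2 \<in> borel_measurable (PiM {1..Suc k} (\<lambda>_. borel))" unfolding g2_def by measurable
    have ind1: "P.indep_var borel (f1 \<circ> X) borel (g1 \<circ> Y)"
      by (rule P.indep_var_compose[OF ind mf1 mg1])
    have ind2: "P.indep_var borel (f2 \<circ> X) borel (g2 \<circ> Y)"
      by (rule P.indep_var_compose[OF ind mf2 mg2])
    have r1: "(f1 \<circ> X) \<in> borel_measurable M" "(g1 \<circ> Y) \<in> borel_measurable M"
      using P.indep_var_rv1[OF ind1] P.indep_var_rv2[OF ind1] by auto
    have r2: "(f2 \<circ> X) \<in> borel_measurable M" "(g2 \<circ> Y) \<in> borel_measurable M"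
      using P.indep_var_rv1[OF ind2] P.indep_var_rv2[OF ind2] by auto
    have Xn: "X \<omega> n = Ahat n \<omega>" for \<omega> unfolding X_def by simp
    have Y1: "chebT (Y \<omega>) (Suc k) = chebT (\<lambda>j. Ahat j \<omega>) (Suc k)" for \<omega>
      by (rule chebT_cong) (simp add: Y_def)
    have Y2: "chebT (Y \<omega>) k = chebT (\<lambda>j. Ahat j \<omega>) k" for \<omega>
      by (rule chebT_cong) (simp add: Y_def)
    have pw: "ennreal ((norm (chebT (\<lambda>j. Ahat j \<omega>) n))\<^sup>2)
        \<le> (f1 \<circ> X) \<omega> * (g1 \<circ> Y) \<omega> + (f2 \<circ> X) \<omega> * (g2 \<circ> Y) \<omega>" for \<omega>
    proof -
      have s0: "0 \<le> spec_norm (Ahat n \<omega>)" by (rule spec_norm_nonneg)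
      have "(f1 \<circ> X) \<omega> * (g1 \<circ> Y) \<omega> + (f2 \<circ> X) \<omega> * (g2 \<circ> Y) \<omega>
        = ennreal ((4 * (spec_norm (Ahat n \<omega>))\<^sup>2 + 2 * spec_norm (Ahat n \<omega>)) * (norm (chebT (\<lambda>j. Ahat j \<omega>) (Suc k)))\<^sup>2
           + (2 * spec_norm (Ahat n \<omega>) + 1) * (norm (chebT (\<lambda>j. Ahat j \<omega>) k))\<^sup>2)"
        using s0 by (simp add: f1_def f2_def g1_def g2_def Xn Y1 Y2 ennreal_mult ennreal_plus[symmetric])
      moreover have "(norm (chebT (\<lambda>j. Ahat j \<omega>) n))\<^sup>2 \<le> (4 * (spec_norm (Ahat n \<omega>))\<^sup>2 + 2 * spec_norm (Ahat n \<omega>)) * (norm (chebT (\<lambda>j. Ahat j \<omega>) (Suc k)))\<^sup>2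
           + (2 * spec_norm (Ahat n \<omega>) + 1) * (norm (chebT (\<lambda>j. Ahat j \<omega>) k))\<^sup>2"
        unfolding n_def chebT.simps by (rule step_bound)
      ultimately show ?thesis by (simp add: ennreal_leI)
    qed
    have "G n \<le> (\<integral>\<^sup>+ \<omega>. (f1 \<circ> X) \<omega> * (g1 \<circ> Y) \<omega> + (f2 \<circ> X) \<omega> * (g2 \<circ> Y) \<omega> \<partial>M)"
      unfolding G_def by (intro nn_integral_mono pw)
    also have "\<dots> = (\<integral>\<^sup>+ \<omega>. (f1 \<circ> X) \<omega> * (g1 \<circ> Y) \<omega> \<partial>M) + (\<integral>\<^sup>+ \<omega>. (f2 \<circ> X) \<omega> * (g2 \<circ> Y) \<omega> \<partial>M)"
    proof -
      note [measurable] = r1[unfolded comp_def] r2[unfolded comp_def]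
      show ?thesis by (intro nn_integral_add) (simp_all add: comp_def)
    qed
    also have "\<dots> = (\<integral>\<^sup>+ \<omega>. (f1 \<circ> X) \<omega> \<partial>M) * (\<integral>\<^sup>+ \<omega>. (g1 \<circ> Y) \<omega> \<partial>M)
        + (\<integral>\<^sup>+ \<omega>. (f2 \<circ> X) \<omega> \<partial>M) * (\<integral>\<^sup>+ \<omega>. (g2 \<circ> Y) \<omega> \<partial>M)"
      using indep_nn_mult[OF assms(1) ind1] indep_nn_mult[OF assms(1) ind2] by simp
    also have "(\<integral>\<^sup>+ \<omega>. (g1 \<circ> Y) \<omega> \<partial>M) = G (Suc k)"
      unfolding G_def by (simp add: g1_def Y1)
    also have "(\<integral>\<^sup>+ \<omega>. (g2 \<circ> Y) \<omega> \<partial>M) = G k"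
      unfolding G_def by (simp add: g2_def Y2)
    also have "(\<integral>\<^sup>+ \<omega>. (f1 \<circ> X) \<omega> \<partial>M) = 4 * Pm n + 2 * Qm n"
    proof -
      have [measurable]: "Ahat n \<in> borel_measurable M" by (rule rv) (simp add: n_def)
      have "(\<integral>\<^sup>+ \<omega>. (f1 \<circ> X) \<omega> \<partial>M) = (\<integral>\<^sup>+ \<omega>. 4 * ennreal ((spec_norm (Ahat n \<omega>))\<^sup>2) + 2 * ennreal (spec_norm (Ahat n \<omega>)) \<partial>M)"
        by (intro nn_integral_cong) (simp add: f1_def Xn spec_norm_nonneg ennreal_plus[symmetric] ennreal_mult)
      also have "\<dots> = (\<integral>\<^sup>+ \<omega>. 4 * ennreal ((spec_norm (Ahat n \<omega>))\<^sup>2) \<partial>M) + (\<integral>\<^sup>+ \<omega>. 2 * ennreal (spec_norm (Ahat n \<omega>)) \<partial>M)"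
        by (intro nn_integral_add) measurable
      also have "\<dots> = 4 * Pm n + 2 * Qm n"
        unfolding Pm_def Qm_def by (simp add: nn_integral_cmult)
      finally show ?thesis .
    qed
    also have "(\<integral>\<^sup>+ \<omega>. (f2 \<circ> X) \<omega> \<partial>M) = 2 * Qm n + 1"
    proof -
      have [measurable]: "Ahat n \<in> borel_measurable M" by (rule rv) (simp add: n_def)
      have "(\<integral>\<^sup>+ \<omega>. (f2 \<circ> X) \<omega> \<partial>M) = (\<integral>\<^sup>+ \<omega>. 2 * ennreal (spec_norm (Ahat n \<omega>)) + 1 \<partial>M)"
        by (intro nn_integral_cong) (simp add: f2_def Xn spec_norm_nonneg ennreal_plus[symmetric] ennreal_mult)
      also have "\<dots> = (\<integral>\<^sup>+ \<omega>. 2 * ennreal (spec_norm (Ahat n \<omega>)) \<partial>M) + (\<integral>\<^sup>+ \<omega>. 1 \<partial>M)"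
        by (intro nn_integral_add) measurable
      also have "\<dots> = 2 * Qm n + 1"
        unfolding Qm_def by (simp add: nn_integral_cmult P.emeasure_space_1)
      finally show ?thesis .
    qed
    finally have main: "G n \<le> (4 * Pm n + 2 * Qm n) * G (Suc k) + (2 * Qm n + 1) * G k" .
    have hn: "4 * Pm n + 2 * Qm n + 1 \<le> a" by (rule hyp) (simp add: n_def)
    have q: "2 * Qm n + 1 \<le> a"
      using hn by (metis add.commute add.left_commute add_increasing2 zero_le order_trans order_refl)
    have "G n \<le> (4 * Pm n + 2 * Qm n) * (d * a ^ Suc k) + (2 * Qm n + 1) * (d * a ^ k)"
      using main IH1 IH2 by (meson add_mono mult_left_mono order_trans zero_le)
    also have "(2 * Qm n + 1) * (d * a ^ k) \<le> a * (d * a ^ k)"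
      using q by (intro mult_right_mono) auto
    also have "a * (d * a ^ k) = 1 * (d * a ^ Suc k)" by (simp add: algebra_simps)
    also have "(4 * Pm n + 2 * Qm n) * (d * a ^ Suc k) + 1 * (d * a ^ Suc k)
        = (4 * Pm n + 2 * Qm n + 1) * (d * a ^ Suc k)" by (simp add: algebra_simps)
    also have "\<dots> \<le> a * (d * a ^ Suc k)"
      using hn by (intro mult_right_mono) auto
    also have "\<dots> = d * a ^ Suc (Suc k)" by (simp add: algebra_simps)
    finally show ?thesis unfolding n_def by simp
  qed
  have both: "G k \<le> d * a ^ k \<and> G (Suc k) \<le> d * a ^ Suc k" for k
  proof (induction k)
    case 0 then show ?case using base0 base1 by simp
  next
    case (Suc k) then show ?case using step[of k] by simp
  qed
  show ?thesis
    using both unfolding G_def target by blast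
qed

end
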